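(* There is an absolute constant $C>0$ such that the following holds. Let $n,d,k\ge1$, let $\phi:\mathbb{R}\to\mathbb{R}$ be $L$-Lipschitz with $\phi(0)=0$, let $b>0$, and let $x_1,\dots,x_n,x'_1,\dots,x'_n\in\mathbb{R}^d$ satisfy $\|x_i\|_2,\|x'_i\|_2\le b$. For $a>0$ let $\mathcal{G}^k_a=\{A\in\mathbb{R}^{d\times k}:\|A\|_{2,\infty}\le a\}$. Then $$\widehat{\mathfrak{R}}\big(\mathcal{F}_k(\mathcal{G}^k_a)\big)\le C\left(\frac1n+\frac{a^2b^2\sqrt{k}\,L^2}{\sqrt n}\sqrt{\log(2dk)}\,\log\big(2+n\,b^2a^2L^2\big)\right).$$
   Context: For $A\in\mathbb{R}^{d\times k}$ with columns $A_{\cdot 1},\dots,A_{\cdot k}$: $\|A\|_{2,\infty}=\max_{j\le k}\|A_{\cdot j}\|_2$. For $u,v\in\mathbb{R}^k$, $\zeta_k(u,v)=\frac1k\|u-v\|_2^2$. The function $\phi$ is applied coordinatewise to vectors. Given fixed points $x_1,\dots,x_n,x'_1,\dots,x'_n\in\mathbb{R}^d$ and a set $\mathcal{G}\subset\mathbb{R}^{d\times k}$, define $\mathcal{F}_k(\mathcal{G})=\{(\zeta_k(\phi(A^tx_i),\phi(A^tx'_i)))_{i=1}^n : A\in\mathcal{G}\}\subset\mathbb{R}^n$. For a set $\mathcal{F}\subset\mathbb{R}^n$, $\widehat{\mathfrak{R}}(\mathcal{F})=\frac1n\mathbb{E}_\varepsilon\sup_{f\in\mathcal{F}}\sum_{i=1}^n\varepsilon_if_i$,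 where $\varepsilon_1,\dots,\varepsilon_n$ are i.i.d. uniform on $\{-1,1\}$. *)

theory Defs
  imports "HOL-Analysis.Analysis" "HOL-Library.FuncSet"
begin

text \<open>Vectors in R^m are represented as functions nat => real (only indices < m matter);
  a d x k matrix A is a function nat => nat => real with entries A i j, i < d, j < k.\<close>

definition vnorm :: "nat \<Rightarrow> (nat \<Rightarrow> real) \<Rightarrow> real" where
  "vnorm m x = sqrt (\<Sum>l<m. (x l)^2)"

definition norm_2inf :: "nat \<Rightarrow> nat \<Rightarrow> (nat \<Rightarrow> nat \<Rightarrow> real) \<Rightarrow> real" where
  "norm_2inf d k A = Max ((\<lambda>j. vnorm d (\<lambda>i. A i j)) ` {..<k})"

definition matT_vec :: "nat \<Rightarrow> (nat \<Rightarrow> nat \<Rightarrow> real) \<Rightarrow> (nat \<Rightarrow> real) \<Rightarrow> (nat \<Rightarrow> real)" where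
  "matT_vec d A x = (\<lambda>j. \<Sum>i<d. A i j * x i)"

definition zeta :: "nat \<Rightarrow> (nat \<Rightarrow> real) \<Rightarrow> (nat \<Rightarrow> real) \<Rightarrow> real" where
  "zeta k u v = (1 / real k) * (\<Sum>j<k. (u j - v j)^2)"

definition G_set :: "nat \<Rightarrow> nat \<Rightarrow> real \<Rightarrow> (nat \<Rightarrow> nat \<Rightarrow> real) set" where
  "G_set d k a = {A. norm_2inf d k A \<le> a}"

definition F_set :: "nat \<Rightarrow> nat \<Rightarrow> nat \<Rightarrow> (real \<Rightarrow> real) \<Rightarrow> (nat \<Rightarrow> nat \<Rightarrow> real)
    \<Rightarrow> (nat \<Rightarrow> nat \<Rightarrow> real) \<Rightarrow> (nat \<Rightarrow> nat \<Rightarrow> real) set \<Rightarrow> (nat \<Rightarrow> real) set" where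
  "F_set n d k \<phi> x x' G =
     (\<lambda>A. (\<lambda>i. if i < n then zeta k (\<lambda>j. \<phi> (matT_vec d A (x i) j)) (\<lambda>j. \<phi> (matT_vec d A (x' i) j)) else 0)) ` G"

definition rademacher :: "nat \<Rightarrow> (nat \<Rightarrow> real) set \<Rightarrow> real" where
  "rademacher n F = (1 / real n) *
     ((\<Sum>\<epsilon>\<in>PiE {..<n} (\<lambda>_. {-1, 1::real}). Sup ((\<lambda>f. \<Sum>i<n. \<epsilon> i * f i) ` F)) / 2 ^ n)"

end

theory Submission
  imports Defs
begin

definition Esig :: "nat \<Rightarrow> (nat \<Rightarrow> real) set" where
  "Esig n = PiE {..<n} (\<lambda>_. {-1, 1})"

definition RS :: "nat \<Rightarrow> 'a set \<Rightarrow> (nat \<Rightarrow> 'a \<Rightarrow> real) \<Rightarrow> real" where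
  "RS n S g = (\<Sum>\<epsilon>\<in>Esig n. SUP s\<in>S. \<Sum>i<n. \<epsilon> i * g i s)"

definition fl :: "nat \<Rightarrow> (nat \<Rightarrow> real) \<Rightarrow> (nat \<Rightarrow> real)" where
  "fl m \<epsilon> = \<epsilon>(m := - \<epsilon> m)"

lemma Esig_finite: "finite (Esig n)"
  unfolding Esig_def by (simp add: finite_PiE)

lemma Esig_card: "card (Esig n) = 2 ^ n"
  unfolding Esig_def by (simp add: card_PiE eval_nat_numeral)

lemma Esig_val: "\<epsilon> \<in> Esig n \<Longrightarrow> i < n \<Longrightarrow> \<epsilon> i = -1 \<or> \<epsilon> i = 1"
  unfolding Esig_def by (auto simp: PiE_def Pi_def)

lemma Esig_abs: "\<epsilon> \<in> Esig n \<Longrightarrow> i < n \<Longrightarrow> \<bar>\<epsilon> i\<bar> = 1"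
  using Esig_val by fastforce

lemma fl_mem: "m < n \<Longrightarrow> \<epsilon> \<in> Esig n \<Longrightarrow> fl m \<epsilon> \<in> Esig n"
  unfolding Esig_def fl_def by (auto simp: PiE_def Pi_def extensional_def)

lemma fl_fl: "fl m (fl m \<epsilon>) = \<epsilon>"
  unfolding fl_def by auto

lemma sum_fl: "m < n \<Longrightarrow> (\<Sum>\<epsilon>\<in>Esig n. F (fl m \<epsilon>)) = (\<Sum>\<epsilon>\<in>Esig n. (F \<epsilon> :: real))"
  by (rule sum.reindex_bij_witness[where i="fl m" and j="fl m"]) (auto simp: fl_fl fl_mem)

lemma sum_split_m:
  fixes \<epsilon> :: "nat \<Rightarrow> real" and n :: nat
  assumes "m < n"
  shows "(\<Sum>i<n. \<epsilon> i * g i (s::'a)) = \<epsilon> m * g m s + (\<Sum>i\<in>{..<n}-{m}. \<epsilon> i * g i s)"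
  using assms by (subst sum.remove[where x=m]) auto

lemma core:
  fixes g h G :: "'a \<Rightarrow> real"
  assumes ne: "S \<noteq> {}" and bg: "\<forall>s\<in>S. \<bar>g s\<bar> \<le> K" and bh: "\<forall>s\<in>S. \<bar>h s\<bar> \<le> K"
    and bG: "\<forall>s\<in>S. \<bar>G s\<bar> \<le> K"
    and cmp: "\<forall>s\<in>S. \<forall>t\<in>S. \<bar>g s - g t\<bar> \<le> \<bar>h s - h t\<bar>"
  shows "(SUP s\<in>S. g s + G s) + (SUP s\<in>S. - g s + G s)
       \<le> (SUP s\<in>S. h s + G s) + (SUP s\<in>S. - h s + G s)"
proof -
  have b1: "bdd_above ((\<lambda>s. h s + G s) ` S)"
    by (rule bdd_aboveI2[where M="2*K"]) (use bh bG in fastforce)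
  have b2: "bdd_above ((\<lambda>s. - h s + G s) ` S)"
    by (rule bdd_aboveI2[where M="2*K"]) (use bh bG in fastforce)
  define R where "R = (SUP s\<in>S. h s + G s) + (SUP s\<in>S. - h s + G s)"
  have key: "(g s + G s) + (- g t + G t) \<le> R" if "s \<in> S" "t \<in> S" for s t
  proof (cases "h s \<ge> h t")
    case True
    have "h s + G s \<le> (SUP s\<in>S. h s + G s)" by (rule cSUP_upper[OF that(1) b1])
    moreover have "- h t + G t \<le> (SUP s\<in>S. - h s + G s)" by (rule cSUP_upper[OF that(2) b2])
    moreover have "g s - g t \<le> h s - h t" using cmp that True by fastforce
    ultimately show ?thesis unfolding R_def by linarith
  next
    case False
    have "h t + G t \<le> (SUP s\<in>S. h s + G s)" by (rule cSUP_upper[OF that(2) b1])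
    moreover have "- h s + G s \<le> (SUP s\<in>S. - h s + G s)" by (rule cSUP_upper[OF that(1) b2])
    moreover have "g s - g t \<le> h t - h s" using cmp that False by fastforce
    ultimately show ?thesis unfolding R_def by linarith
  qed
  have "(SUP s\<in>S. g s + G s) \<le> R - (SUP s\<in>S. - g s + G s)"
  proof (rule cSUP_least[OF ne])
    fix s assume s: "s \<in> S"
    have "(SUP t\<in>S. - g t + G t) \<le> R - (g s + G s)"
      by (rule cSUP_least[OF ne]) (use key s in fastforce)
    then show "g s + G s \<le> R - (SUP s\<in>S. - g s + G s)" by linarith
  qed
  then show ?thesis unfolding R_def by linarith
qed

lemma G_bound:
  fixes \<epsilon> :: "nat \<Rightarrow> real" and g :: "nat \<Rightarrow> 'a \<Rightarrow> real"
  assumes "\<epsilon> \<in> Esig n" "\<forall>i<n. \<bar>g i s\<bar> \<le> K" "0 \<le> K" "A \<subseteq> {..<n}"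
  shows "\<bar>\<Sum>i\<in>A. \<epsilon> i * g i s\<bar> \<le> real n * K"
proof -
  have fA: "finite A" using assms(4) finite_subset by blast
  have "\<bar>\<Sum>i\<in>A. \<epsilon> i * g i s\<bar> \<le> (\<Sum>i\<in>A. \<bar>\<epsilon> i * g i s\<bar>)" by (rule sum_abs)
  also have "\<dots> \<le> (\<Sum>i\<in>A. K)"
  proof (rule sum_mono)
    fix i assume "i \<in> A"
    then have "i < n" using assms(4) by auto
    then show "\<bar>\<epsilon> i * g i s\<bar> \<le> K" using assms Esig_abs[of \<epsilon> n i] by (simp add: abs_mult)
  qed
  also have "\<dots> \<le> (\<Sum>i\<in>{..<n}. K)" by (rule sum_mono2) (use assms in auto)
  finally show ?thesis by simp
qed

lemma comp_step:
  fixes g h :: "nat \<Rightarrow> 'a \<Rightarrow> real"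
  assumes ne: "S \<noteq> {}" and mn: "m < n"
    and bg: "\<forall>i<n. \<forall>s\<in>S. \<bar>g i s\<bar> \<le> K" and bh: "\<forall>i<n. \<forall>s\<in>S. \<bar>h i s\<bar> \<le> K"
    and agree: "\<forall>i<n. i \<noteq> m \<longrightarrow> h i = g i"
    and cmp: "\<forall>s\<in>S. \<forall>t\<in>S. \<bar>g m s - g m t\<bar> \<le> \<bar>h m s - h m t\<bar>"
  shows "RS n S g \<le> RS n S h"
proof -
  obtain s0 where s0: "s0 \<in> S" using ne by blast
  have K0: "0 \<le> K" using bg mn s0 by force
  define G where "G \<epsilon> s = (\<Sum>i\<in>{..<n}-{m}. \<epsilon> i * g i s)" for \<epsilon> :: "nat \<Rightarrow> real" and s
  define F where "F f \<epsilon> = (SUP s\<in>S. \<Sum>i<n. \<epsilon> i * f i s)" for f :: "nat \<Rightarrow> 'a \<Rightarrow> real" and \<epsilon>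
  have Gh: "(\<Sum>i\<in>{..<n}-{m}. \<epsilon> i * h i s) = G \<epsilon> s" for \<epsilon> s
    unfolding G_def by (rule sum.cong) (use agree in auto)
  have Gfl: "G (fl m \<epsilon>) s = G \<epsilon> s" for \<epsilon> s
    unfolding G_def fl_def by (rule sum.cong) auto
  have Fg: "F g \<epsilon> = (SUP s\<in>S. \<epsilon> m * g m s + G \<epsilon> s)" for \<epsilon>
    unfolding F_def G_def by (simp only: sum_split_m[OF mn])
  have Fh: "F h \<epsilon> = (SUP s\<in>S. \<epsilon> m * h m s + G \<epsilon> s)" for \<epsilon>
    unfolding F_def using sum_split_m[OF mn, of \<epsilon> h] Gh by simp
  have flm: "fl m \<epsilon> m = - \<epsilon> m" for \<epsilon> unfolding fl_def by simp
  have pt: "F g \<epsilon> + F g (fl m \<epsilon>) \<le> F h \<epsilon> + F h (fl m \<epsilon>)" if e: "\<epsilon> \<in> Esig n" for \<epsilon>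
  proof -
    have bG: "\<forall>s\<in>S. \<bar>G \<epsilon> s\<bar> \<le> real (Suc n) * K"
    proof
      fix s assume "s \<in> S"
      have "\<bar>G \<epsilon> s\<bar> \<le> real n * K" unfolding G_def
        by (rule G_bound[OF e]) (use bg \<open>s \<in> S\<close> K0 in auto)
      then show "\<bar>G \<epsilon> s\<bar> \<le> real (Suc n) * K" using K0 by (simp add: algebra_simps)
    qed
    have KK: "K \<le> real (Suc n) * K" using K0 by (simp add: algebra_simps)
    have bgm: "\<forall>s\<in>S. \<bar>g m s\<bar> \<le> real (Suc n) * K"
      using bg mn KK by force
    have bhm: "\<forall>s\<in>S. \<bar>h m s\<bar> \<le> real (Suc n) * K"
      using bh mn KK by force
    note c = core[OF ne bgm bhm bG cmp]
    from Esig_val[OF e mn] show ?thesis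
    proof
      assume "\<epsilon> m = -1"
      then show ?thesis unfolding Fg Fh Gfl flm using c by simp
    next
      assume "\<epsilon> m = 1"
      then show ?thesis unfolding Fg Fh Gfl flm using c by simp
    qed
  qed
  have "2 * RS n S g = (\<Sum>\<epsilon>\<in>Esig n. F g \<epsilon> + F g (fl m \<epsilon>))"
    unfolding RS_def F_def sum.distrib sum_fl[OF mn, of "\<lambda>\<epsilon>. SUP s\<in>S. \<Sum>i<n. \<epsilon> i * g i s"] by simp
  also have "\<dots> \<le> (\<Sum>\<epsilon>\<in>Esig n. F h \<epsilon> + F h (fl m \<epsilon>))" by (rule sum_mono) (use pt in auto)
  also have "\<dots> = 2 * RS n S h"
    unfolding RS_def F_def sum.distrib sum_fl[OF mn, of "\<lambda>\<epsilon>. SUP s\<in>S. \<Sum>i<n. \<epsilon> i * h i s"] by simp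
  finally show ?thesis by simp
qed

lemma RS_cong: "(\<And>i s. i < n \<Longrightarrow> s \<in> S \<Longrightarrow> g i s = h i s) \<Longrightarrow> RS n S g = RS n S h"
  unfolding RS_def by (intro sum.cong refl SUP_cong) auto

lemma comparison:
  fixes g h :: "nat \<Rightarrow> 'a \<Rightarrow> real"
  assumes ne: "S \<noteq> {}"
    and bg: "\<forall>i<n. \<forall>s\<in>S. \<bar>g i s\<bar> \<le> K" and bh: "\<forall>i<n. \<forall>s\<in>S. \<bar>h i s\<bar> \<le> K"
    and cmp: "\<forall>i<n. \<forall>s\<in>S. \<forall>t\<in>S. \<bar>g i s - g i t\<bar> \<le> \<bar>h i s - h i t\<bar>"
  shows "RS n S g \<le> RS n S h"
proof -
  define mx where "mx j = (\<lambda>i. if i < j then h i else g i)" for j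
  have "j \<le> n \<longrightarrow> RS n S g \<le> RS n S (mx j)" for j
  proof (induction j)
    case 0
    then show ?case unfolding mx_def by simp
  next
    case (Suc j)
    show ?case
    proof
      assume j: "Suc j \<le> n"
      have "RS n S (mx j) \<le> RS n S (mx (Suc j))"
        by (rule comp_step[OF ne, of j n _ K]) (use j bg bh cmp in \<open>auto simp: mx_def\<close>)
      then show "RS n S g \<le> RS n S (mx (Suc j))" using Suc j by simp
    qed
  qed
  then have "RS n S g \<le> RS n S (mx n)" by simp
  also have "RS n S (mx n) = RS n S h" by (rule RS_cong) (simp add: mx_def)
  finally show ?thesis .
qed

lemma sum_eps_bound:
  fixes g :: "nat \<Rightarrow> 'a \<Rightarrow> real"
  assumes "\<epsilon> \<in> Esig n" "\<forall>i<n. \<forall>s\<in>S. \<bar>g i s\<bar> \<le> K" "0 \<le> K"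
  shows "bdd_above ((\<lambda>s. \<Sum>i<n. \<epsilon> i * g i s) ` S)"
proof (rule bdd_aboveI2[where M="real n * K"])
  fix s assume "s \<in> S"
  have "\<bar>\<Sum>i<n. \<epsilon> i * g i s\<bar> \<le> real n * K"
    by (rule G_bound[OF assms(1)]) (use assms \<open>s \<in> S\<close> in auto)
  then show "(\<Sum>i<n. \<epsilon> i * g i s) \<le> real n * K" by simp
qed

lemma RS_add:
  fixes f g :: "nat \<Rightarrow> 'a \<Rightarrow> real"
  assumes ne: "S \<noteq> {}"
    and bf: "\<forall>i<n. \<forall>s\<in>S. \<bar>f i s\<bar> \<le> K" and bg: "\<forall>i<n. \<forall>s\<in>S. \<bar>g i s\<bar> \<le> K" and K0: "0 \<le> K"
  shows "RS n S (\<lambda>i s. f i s + g i s) \<le> RS n S f + RS n S g"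
  unfolding RS_def sum.distrib[symmetric]
proof (rule sum_mono)
  fix \<epsilon> assume e: "\<epsilon> \<in> Esig n"
  note bf' = sum_eps_bound[OF e bf K0] and bg' = sum_eps_bound[OF e bg K0]
  show "(SUP s\<in>S. \<Sum>i<n. \<epsilon> i * (f i s + g i s))
        \<le> (SUP s\<in>S. \<Sum>i<n. \<epsilon> i * f i s) + (SUP s\<in>S. \<Sum>i<n. \<epsilon> i * g i s)"
  proof (rule cSUP_least[OF ne])
    fix s assume s: "s \<in> S"
    have "(\<Sum>i<n. \<epsilon> i * (f i s + g i s)) = (\<Sum>i<n. \<epsilon> i * f i s) + (\<Sum>i<n. \<epsilon> i * g i s)"
      by (simp add: distrib_left sum.distrib)
    also have "\<dots> \<le> (SUP s\<in>S. \<Sum>i<n. \<epsilon> i * f i s) + (SUP s\<in>S. \<Sum>i<n. \<epsilon> i * g i s)"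
      by (intro add_mono cSUP_upper[OF s] bf' bg')
    finally show "(\<Sum>i<n. \<epsilon> i * (f i s + g i s))
        \<le> (SUP s\<in>S. \<Sum>i<n. \<epsilon> i * f i s) + (SUP s\<in>S. \<Sum>i<n. \<epsilon> i * g i s)" .
  qed
qed

lemma eps_ortho:
  assumes "i < n" "j < n"
  shows "(\<Sum>\<epsilon>\<in>Esig n. \<epsilon> i * \<epsilon> j) = (if i = j then 2 ^ n else 0)"
proof (cases "i = j")
  case True
  have "(\<Sum>\<epsilon>\<in>Esig n. \<epsilon> i * \<epsilon> j) = (\<Sum>\<epsilon>\<in>Esig n. 1)"
    by (rule sum.cong) (use True Esig_val[OF _ assms(1)] in fastforce)+
  then show ?thesis using True Esig_card[of n] by simp
next
  case False
  have "(\<Sum>\<epsilon>\<in>Esig n. \<epsilon> i * \<epsilon> j) = (\<Sum>\<epsilon>\<in>Esig n. fl i \<epsilon> i * fl i \<epsilon> j)"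
    using sum_fl[OF assms(1), of "\<lambda>\<epsilon>. \<epsilon> i * \<epsilon> j"] by simp
  also have "\<dots> = - (\<Sum>\<epsilon>\<in>Esig n. \<epsilon> i * \<epsilon> j)"
    using False by (simp add: fl_def sum_negf)
  finally show ?thesis using False by simp
qed

lemma khintchine2:
  fixes c :: "nat \<Rightarrow> real"
  shows "(\<Sum>\<epsilon>\<in>Esig n. (\<Sum>i<n. \<epsilon> i * c i)^2) = 2 ^ n * (\<Sum>i<n. (c i)^2)"
proof -
  have "(\<Sum>\<epsilon>\<in>Esig n. (\<Sum>i<n. \<epsilon> i * c i)^2)
      = (\<Sum>\<epsilon>\<in>Esig n. \<Sum>i<n. \<Sum>j<n. c i * c j * (\<epsilon> i * \<epsilon> j))"
    by (simp add: power2_eq_square sum_product algebra_simps)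
  also have "\<dots> = (\<Sum>i<n. \<Sum>j<n. c i * c j * (\<Sum>\<epsilon>\<in>Esig n. \<epsilon> i * \<epsilon> j))"
    by (simp add: sum.swap[of _ "Esig n"] sum_distrib_left)
  also have "\<dots> = (\<Sum>i<n. \<Sum>j<n. if i = j then c i * c j * 2 ^ n else 0)"
    by (intro sum.cong refl) (simp add: eps_ortho)
  also have "\<dots> = (\<Sum>i<n. c i * c i * 2 ^ n)"
    by (simp add: sum.delta)
  finally show ?thesis by (simp add: power2_eq_square sum_distrib_left algebra_simps)
qed

lemma vnorm_nonneg: "0 \<le> vnorm m x"
  unfolding vnorm_def by (simp add: sum_nonneg)

lemma vnorm_sq: "(vnorm m x)^2 = (\<Sum>l<m. (x l)^2)"
  unfolding vnorm_def by (simp add: sum_nonneg)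

lemma CS: "\<bar>\<Sum>l<m. w l * y l\<bar> \<le> vnorm m w * vnorm m y"
proof -
  have "(\<Sum>l<m. w l * y l)^2 \<le> (\<Sum>l<m. (w l)^2) * (\<Sum>l<m. (y l)^2)"
    by (rule Cauchy_Schwarz_ineq_sum)
  also have "\<dots> = (vnorm m w * vnorm m y)^2" by (simp add: vnorm_sq power_mult_distrib)
  finally have "(\<Sum>l<m. w l * y l)^2 \<le> (vnorm m w * vnorm m y)^2" .
  then show ?thesis using vnorm_nonneg[of m w] vnorm_nonneg[of m y]
    by (metis power2_abs power2_le_imp_le mult_nonneg_nonneg)
qed

lemma amgm: "0 \<le> y \<Longrightarrow> 0 < t \<Longrightarrow> sqrt y \<le> (y / t + t) / 2"
proof -
  assume y: "0 \<le> y" and t: "0 < t"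
  have "0 \<le> (sqrt y - t)^2" by simp
  then have "2 * t * sqrt y \<le> y + t^2" using y by (simp add: power2_eq_square algebra_simps)
  then have "sqrt y \<le> (y + t^2) / (2 * t)" using t by (simp add: field_simps)
  also have "\<dots> = (y / t + t) / 2" using t by (simp add: field_simps power2_eq_square)
  finally show ?thesis .
qed

lemma linear_bound:
  fixes y :: "nat \<Rightarrow> nat \<Rightarrow> real"
  assumes c0: "0 \<le> c" and a0: "0 \<le> a" and b0: "0 < b" and n1: "1 \<le> n"
    and yb: "\<forall>i<n. vnorm d (y i) \<le> b"
  shows "RS n {w. vnorm d w \<le> a} (\<lambda>i w. c * (\<Sum>l<d. w l * y i l)) \<le> c * a * (2 ^ n * (sqrt n * b))"
proof -
  define W where "W = {w. vnorm d w \<le> a}"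
  have "(\<lambda>_. 0) \<in> W" unfolding W_def by (simp add: vnorm_def a0)
  then have ne: "W \<noteq> {}" by blast
  define z where "z \<epsilon> l = (\<Sum>i<n. \<epsilon> i * y i l)" for \<epsilon> :: "nat \<Rightarrow> real" and l
  have pt: "(SUP w\<in>W. \<Sum>i<n. \<epsilon> i * (c * (\<Sum>l<d. w l * y i l)))
      \<le> c * a * vnorm d (z \<epsilon>)" for \<epsilon>
  proof (rule cSUP_least[OF ne])
    fix w assume "w \<in> W"
    then have wa: "vnorm d w \<le> a" unfolding W_def by simp
    have "(\<Sum>i<n. \<epsilon> i * (c * (\<Sum>l<d. w l * y i l))) = c * (\<Sum>l<d. w l * z \<epsilon> l)"
      unfolding z_def by (simp add: sum_distrib_left sum.swap[of _ "{..<n}"] algebra_simps)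
    also have "\<dots> \<le> c * (vnorm d w * vnorm d (z \<epsilon>))"
      using CS[where w=w and m=d and y="z \<epsilon>"] c0 by (intro mult_left_mono) auto
    also have "\<dots> \<le> c * (a * vnorm d (z \<epsilon>))"
      using wa c0 vnorm_nonneg[of d "z \<epsilon>"] by (intro mult_left_mono mult_right_mono) auto
    finally show "(\<Sum>i<n. \<epsilon> i * (c * (\<Sum>l<d. w l * y i l))) \<le> c * a * vnorm d (z \<epsilon>)" by simp
  qed
  define t where "t = sqrt n * b"
  have t0: "0 < t" unfolding t_def using n1 b0 by simp
  have tt: "t^2 = n * b^2" unfolding t_def by (simp add: power_mult_distrib)
  have sq: "(\<Sum>\<epsilon>\<in>Esig n. (vnorm d (z \<epsilon>))^2) \<le> 2 ^ n * (n * b^2)"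
  proof -
    have "(\<Sum>\<epsilon>\<in>Esig n. (vnorm d (z \<epsilon>))^2) = (\<Sum>l<d. \<Sum>\<epsilon>\<in>Esig n. (\<Sum>i<n. \<epsilon> i * y i l)^2)"
      unfolding vnorm_sq z_def by (rule sum.swap)
    also have "\<dots> = (\<Sum>l<d. 2 ^ n * (\<Sum>i<n. (y i l)^2))" by (simp add: khintchine2)
    also have "\<dots> = 2 ^ n * (\<Sum>i<n. (vnorm d (y i))^2)"
      by (simp add: vnorm_sq sum_distrib_left sum.swap[of _ "{..<d}"])
    also have "\<dots> \<le> 2 ^ n * (\<Sum>i<n. b^2)"
      using yb vnorm_nonneg by (intro mult_left_mono sum_mono power_mono) auto
    finally show ?thesis by simp
  qed
  have "RS n W (\<lambda>i w. c * (\<Sum>l<d. w l * y i l)) \<le> (\<Sum>\<epsilon>\<in>Esig n. c * a * vnorm d (z \<epsilon>))"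
    unfolding RS_def by (rule sum_mono) (rule pt)
  also have "\<dots> = c * a * (\<Sum>\<epsilon>\<in>Esig n. vnorm d (z \<epsilon>))" by (simp add: sum_distrib_left)
  also have "(\<Sum>\<epsilon>\<in>Esig n. vnorm d (z \<epsilon>)) \<le> (\<Sum>\<epsilon>\<in>Esig n. ((vnorm d (z \<epsilon>))^2 / t + t) / 2)"
  proof (rule sum_mono)
    fix \<epsilon>
    have "vnorm d (z \<epsilon>) = sqrt ((vnorm d (z \<epsilon>))^2)" using vnorm_nonneg by simp
    also have "\<dots> \<le> ((vnorm d (z \<epsilon>))^2 / t + t) / 2" by (rule amgm[OF _ t0]) simp
    finally show "vnorm d (z \<epsilon>) \<le> ((vnorm d (z \<epsilon>))^2 / t + t) / 2" .
  qed
  also have "\<dots> = ((\<Sum>\<epsilon>\<in>Esig n. (vnorm d (z \<epsilon>))^2) / t + 2 ^ n * t) / 2"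
    by (simp add: sum_divide_distrib[symmetric] sum.distrib Esig_card)
  also have "\<dots> \<le> ((2 ^ n * (n * b^2)) / t + 2 ^ n * t) / 2"
    using sq t0 by (intro divide_right_mono add_right_mono divide_right_mono) auto
  also have "\<dots> = 2 ^ n * t" using t0 tt by (simp add: field_simps power2_eq_square)
  finally show ?thesis unfolding W_def t_def using c0 a0
    by (smt (verit) mult_left_mono mult_nonneg_nonneg)
qed

lemma absmul: "0 \<le> (c::real) \<Longrightarrow> \<bar>c * x - c * y\<bar> = c * \<bar>x - y\<bar>"
  by (simp add: abs_mult right_diff_distrib[symmetric])

lemma absmul2: "0 \<le> (c::real) \<Longrightarrow> \<bar>- c * x - - c * y\<bar> = c * \<bar>x - y\<bar>"
  by (simp add: abs_mult right_diff_distrib[symmetric] abs_minus_commute)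

lemma main_bound:
  fixes \<phi> :: "real \<Rightarrow> real" and x x' :: "nat \<Rightarrow> nat \<Rightarrow> real"
  assumes n1: "n \<ge> 1" and k1: "k \<ge> 1"
    and lip: "\<forall>s t. \<bar>\<phi> s - \<phi> t\<bar> \<le> L * \<bar>s - t\<bar>" and phi0: "\<phi> 0 = 0"
    and b0: "b > 0" and xb: "\<forall>i<n. vnorm d (x i) \<le> b \<and> vnorm d (x' i) \<le> b" and a0: "a > 0"
  shows "rademacher n (F_set n d k \<phi> x x' (G_set d k a)) \<le> 8 * (L * a * b)^2 / sqrt (real n)"
proof -
  have L0: "0 \<le> L"
  proof -
    have "\<bar>\<phi> 1 - \<phi> 0\<bar> \<le> L * \<bar>1 - 0\<bar>" using lip by blast
    then show ?thesis by simp
  qed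
  have phib: "\<bar>\<phi> y\<bar> \<le> L * \<bar>y\<bar>" for y using lip[rule_format, of y 0] phi0 by simp
  define B where "B = 2 * L * a * b"
  have B0: "0 \<le> B" unfolding B_def using L0 a0 b0 by simp
  define W where "W = {w. vnorm d w \<le> a}"
  have "(\<lambda>_. 0) \<in> W" unfolding W_def by (simp add: vnorm_def less_imp_le[OF a0])
  then have neW: "W \<noteq> {}" by blast
  define u where "u i w = (\<Sum>l<d. w l * x i l)" for i w
  define v where "v i w = (\<Sum>l<d. w l * x' i l)" for i w
  define p where "p i w = \<phi> (u i w) - \<phi> (v i w)" for i w
  define g where "g i w = (p i w)^2" for i w
  have ub: "\<bar>u i w\<bar> \<le> a * b" if "i < n" "w \<in> W" for i w
  proof -
    have "\<bar>u i w\<bar> \<le> vnorm d w * vnorm d (x i)" unfolding u_def by (rule CS)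
    also have "\<dots> \<le> a * b" using that xb vnorm_nonneg a0 unfolding W_def
      by (intro mult_mono) auto
    finally show ?thesis .
  qed
  have vb: "\<bar>v i w\<bar> \<le> a * b" if "i < n" "w \<in> W" for i w
  proof -
    have "\<bar>v i w\<bar> \<le> vnorm d w * vnorm d (x' i)" unfolding v_def by (rule CS)
    also have "\<dots> \<le> a * b" using that xb vnorm_nonneg a0 unfolding W_def
      by (intro mult_mono) auto
    finally show ?thesis .
  qed
  have phu: "\<bar>\<phi> (u i w)\<bar> \<le> L * a * b" if "i < n" "w \<in> W" for i w
    using phib[of "u i w"] ub[OF that] L0 by (smt (verit) mult_left_mono mult.assoc)
  have phv: "\<bar>\<phi> (v i w)\<bar> \<le> L * a * b" if "i < n" "w \<in> W" for i w
    using phib[of "v i w"] vb[OF that] L0 by (smt (verit) mult_left_mono mult.assoc)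
  have pb: "\<bar>p i w\<bar> \<le> B" if "i < n" "w \<in> W" for i w
    using phu[OF that] phv[OF that] unfolding p_def B_def by simp
  have BLab: "2 * B * (L * a * b) = B^2" unfolding B_def by (simp add: power2_eq_square)
  define K where "K = 2 * B^2"
  have K0: "0 \<le> K" unfolding K_def by simp
  have gb: "\<forall>i<n. \<forall>w\<in>W. \<bar>g i w\<bar> \<le> K"
  proof (intro allI impI ballI)
    fix i w assume "i < n" "w \<in> W"
    then have "\<bar>p i w\<bar> \<le> B" by (rule pb)
    then have "(p i w)^2 \<le> B^2" by (metis abs_le_square_iff abs_of_nonneg B0)
    then have "(p i w)^2 \<le> 2 * B^2" using zero_le_power2[of B] by linarith
    then show "\<bar>g i w\<bar> \<le> K" unfolding g_def K_def by simp
  qed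
  have stepA: "rademacher n (F_set n d k \<phi> x x' (G_set d k a)) \<le> (1 / real n) * (RS n W g / 2 ^ n)"
  proof -
    have "(\<lambda>_ _. 0) \<in> G_set d k a"
    proof -
      have "(\<lambda>j. vnorm d (\<lambda>i. (\<lambda>_ _. 0::real) i j)) ` {..<k} = {0}"
        using k1 by (auto simp: vnorm_def image_iff intro!: exI[of _ 0])
      then show ?thesis unfolding G_set_def norm_2inf_def using a0 by simp
    qed
    then have neG: "G_set d k a \<noteq> {}" by blast
    have pt: "Sup ((\<lambda>f. \<Sum>i<n. \<epsilon> i * f i) ` F_set n d k \<phi> x x' (G_set d k a))
        \<le> (SUP w\<in>W. \<Sum>i<n. \<epsilon> i * g i w)" if e: "\<epsilon> \<in> Esig n" for \<epsilon>
    proof -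
      define H where "H = (SUP w\<in>W. \<Sum>i<n. \<epsilon> i * g i w)"
      have bdd: "bdd_above ((\<lambda>w. \<Sum>i<n. \<epsilon> i * g i w) ` W)" by (rule sum_eps_bound[OF e gb K0])
      show ?thesis unfolding F_set_def image_image H_def[symmetric]
      proof (rule cSUP_least[OF neG])
        fix A assume "A \<in> G_set d k a"
        then have An: "norm_2inf d k A \<le> a" unfolding G_set_def by simp
        define col where "col j = (\<lambda>l. A l j)" for j
        have colW: "col j \<in> W" if "j < k" for j
        proof -
          have "vnorm d (col j) \<le> norm_2inf d k A" unfolding norm_2inf_def col_def
            by (rule Max_ge) (use that in auto)
          then show ?thesis using An unfolding W_def by simp
        qed
        have eq: "(\<Sum>i<n. \<epsilon> i * (if i < n then zeta k (\<lambda>j. \<phi> (matT_vec d A (x i) j)) (\<lambda>j. \<phi> (matT_vec d A (x' i) j)) else 0))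
            = (1 / real k) * (\<Sum>j<k. \<Sum>i<n. \<epsilon> i * g i (col j))"
          unfolding zeta_def matT_vec_def g_def p_def u_def v_def col_def
          by (simp add: sum_distrib_left sum.swap[of _ "{..<k}"] algebra_simps)
        also have "\<dots> \<le> (1 / real k) * (\<Sum>j<k. H)"
          unfolding H_def by (intro mult_left_mono sum_mono cSUP_upper[OF colW bdd]) auto
        also have "\<dots> = H" using k1 by simp
        finally show "(\<Sum>i<n. \<epsilon> i * (if i < n then zeta k (\<lambda>j. \<phi> (matT_vec d A (x i) j)) (\<lambda>j. \<phi> (matT_vec d A (x' i) j)) else 0)) \<le> H" .
      qed
    qed
    show ?thesis unfolding rademacher_def RS_def Esig_def[symmetric]
      using n1 by (intro mult_left_mono divide_right_mono sum_mono pt) auto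
  qed
  have Kb: "B^2 \<le> K" unfolding K_def by simp
  have B0_2: "0 \<le> 2 * B" using B0 by simp
  have BL0: "0 \<le> 2 * B * L" using B0 L0 by simp
  define h1 where "h1 i w = 2 * B * \<phi> (u i w)" for i w
  define h2 where "h2 i w = - (2 * B) * \<phi> (v i w)" for i w
  have h1b: "\<forall>i<n. \<forall>w\<in>W. \<bar>h1 i w\<bar> \<le> K"
  proof (intro allI impI ballI)
    fix i w assume iw: "i < n" "w \<in> W"
    have "\<bar>h1 i w\<bar> = 2 * B * \<bar>\<phi> (u i w)\<bar>" unfolding h1_def using B0 by (simp add: abs_mult)
    also have "\<dots> \<le> 2 * B * (L * a * b)" using phu[OF iw] B0 by (intro mult_left_mono) auto
    finally show "\<bar>h1 i w\<bar> \<le> K" using BLab Kb by simp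
  qed
  have h2b: "\<forall>i<n. \<forall>w\<in>W. \<bar>h2 i w\<bar> \<le> K"
  proof (intro allI impI ballI)
    fix i w assume iw: "i < n" "w \<in> W"
    have "\<bar>h2 i w\<bar> = 2 * B * \<bar>\<phi> (v i w)\<bar>" unfolding h2_def using B0 by (simp add: abs_mult)
    also have "\<dots> \<le> 2 * B * (L * a * b)" using phv[OF iw] B0 by (intro mult_left_mono) auto
    finally show "\<bar>h2 i w\<bar> \<le> K" using BLab Kb by simp
  qed
  have hb: "\<forall>i<n. \<forall>w\<in>W. \<bar>h1 i w + h2 i w\<bar> \<le> K"
  proof (intro allI impI ballI)
    fix i w assume iw: "i < n" "w \<in> W"
    have "\<bar>h1 i w + h2 i w\<bar> = \<bar>2 * B * p i w\<bar>" unfolding h1_def h2_def p_def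
      by (simp add: algebra_simps)
    also have "\<dots> = 2 * B * \<bar>p i w\<bar>" using B0 by (simp add: abs_mult)
    also have "\<dots> \<le> 2 * B * B" using pb[OF iw] B0 by (intro mult_left_mono) auto
    finally show "\<bar>h1 i w + h2 i w\<bar> \<le> K" unfolding K_def by (simp add: power2_eq_square)
  qed
  have stepB: "RS n W g \<le> RS n W (\<lambda>i w. h1 i w + h2 i w)"
  proof (rule comparison[OF neW gb hb], intro allI impI ballI)
    fix i s t assume i: "i < n" and s: "s \<in> W" and t: "t \<in> W"
    have "g i s - g i t = (p i s - p i t) * (p i s + p i t)"
      unfolding g_def by (simp add: power2_eq_square algebra_simps)
    then have "\<bar>g i s - g i t\<bar> = \<bar>p i s - p i t\<bar> * \<bar>p i s + p i t\<bar>"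
      by (simp add: abs_mult)
    also have "\<dots> \<le> \<bar>p i s - p i t\<bar> * (2 * B)"
      using pb[OF i s] pb[OF i t] by (intro mult_left_mono) auto
    also have "\<dots> = \<bar>(h1 i s + h2 i s) - (h1 i t + h2 i t)\<bar>"
      using absmul[OF B0_2, of "p i s" "p i t"]
      unfolding h1_def h2_def p_def by (simp add: algebra_simps)
    finally show "\<bar>g i s - g i t\<bar> \<le> \<bar>(h1 i s + h2 i s) - (h1 i t + h2 i t)\<bar>" .
  qed
  have stepC: "RS n W (\<lambda>i w. h1 i w + h2 i w) \<le> RS n W h1 + RS n W h2"
    by (rule RS_add[OF neW h1b h2b K0])
  define c where "c = 2 * B * L"
  have c0: "0 \<le> c" unfolding c_def using B0 L0 by simp
  define l1 where "l1 i w = c * (\<Sum>l<d. w l * x i l)" for i w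
  define l2 where "l2 i w = c * (\<Sum>l<d. w l * x' i l)" for i w
  have l1b: "\<forall>i<n. \<forall>w\<in>W. \<bar>l1 i w\<bar> \<le> K"
  proof (intro allI impI ballI)
    fix i w assume iw: "i < n" "w \<in> W"
    have "\<bar>l1 i w\<bar> = c * \<bar>u i w\<bar>" unfolding l1_def u_def using c0 by (simp add: abs_mult)
    also have "\<dots> \<le> c * (a * b)" using ub[OF iw] c0 by (intro mult_left_mono) auto
    finally show "\<bar>l1 i w\<bar> \<le> K" using BLab Kb unfolding c_def by (simp add: algebra_simps)
  qed
  have l2b: "\<forall>i<n. \<forall>w\<in>W. \<bar>l2 i w\<bar> \<le> K"
  proof (intro allI impI ballI)
    fix i w assume iw: "i < n" "w \<in> W"
    have "\<bar>l2 i w\<bar> = c * \<bar>v i w\<bar>" unfolding l2_def v_def using c0 by (simp add: abs_mult)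
    also have "\<dots> \<le> c * (a * b)" using vb[OF iw] c0 by (intro mult_left_mono) auto
    finally show "\<bar>l2 i w\<bar> \<le> K" using BLab Kb unfolding c_def by (simp add: algebra_simps)
  qed
  have D1: "RS n W h1 \<le> RS n W l1"
  proof (rule comparison[OF neW h1b l1b], intro allI impI ballI)
    fix i s t assume i: "i < n" and s: "s \<in> W" and t: "t \<in> W"
    have "\<bar>h1 i s - h1 i t\<bar> = 2 * B * \<bar>\<phi> (u i s) - \<phi> (u i t)\<bar>"
      unfolding h1_def using absmul[OF B0_2] by simp
    also have "\<dots> \<le> 2 * B * (L * \<bar>u i s - u i t\<bar>)" using lip B0 by (intro mult_left_mono) auto
    also have "\<dots> = \<bar>l1 i s - l1 i t\<bar>"
      unfolding l1_def c_def u_def using absmul[OF BL0, of "\<Sum>l<d. s l * x i l" "\<Sum>l<d. t l * x i l"] by (simp add: algebra_simps)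
    finally show "\<bar>h1 i s - h1 i t\<bar> \<le> \<bar>l1 i s - l1 i t\<bar>" .
  qed
  have D2: "RS n W h2 \<le> RS n W l2"
  proof (rule comparison[OF neW h2b l2b], intro allI impI ballI)
    fix i s t assume i: "i < n" and s: "s \<in> W" and t: "t \<in> W"
    have "\<bar>h2 i s - h2 i t\<bar> = 2 * B * \<bar>\<phi> (v i s) - \<phi> (v i t)\<bar>"
      unfolding h2_def using absmul2[OF B0_2] by simp
    also have "\<dots> \<le> 2 * B * (L * \<bar>v i s - v i t\<bar>)" using lip B0 by (intro mult_left_mono) auto
    also have "\<dots> = \<bar>l2 i s - l2 i t\<bar>"
      unfolding l2_def c_def v_def using absmul[OF BL0, of "\<Sum>l<d. s l * x' i l" "\<Sum>l<d. t l * x' i l"] by (simp add: algebra_simps)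
    finally show "\<bar>h2 i s - h2 i t\<bar> \<le> \<bar>l2 i s - l2 i t\<bar>" .
  qed
  have E1: "RS n W l1 \<le> c * a * (2 ^ n * (sqrt n * b))"
    unfolding W_def l1_def by (rule linear_bound[OF c0 less_imp_le[OF a0] b0 n1]) (use xb in auto)
  have E2: "RS n W l2 \<le> c * a * (2 ^ n * (sqrt n * b))"
    unfolding W_def l2_def by (rule linear_bound[OF c0 less_imp_le[OF a0] b0 n1]) (use xb in auto)
  have tot: "RS n W g \<le> 2 * (c * a * (2 ^ n * (sqrt n * b)))"
    using stepB stepC D1 D2 E1 E2 by linarith
  have "rademacher n (F_set n d k \<phi> x x' (G_set d k a)) \<le> (1 / real n) * (2 * (c * a * (2 ^ n * (sqrt n * b))) / 2 ^ n)"
  proof -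
    have "RS n W g / 2 ^ n \<le> 2 * (c * a * (2 ^ n * (sqrt n * b))) / 2 ^ n"
      by (rule divide_right_mono[OF tot]) simp
    then have "(1 / real n) * (RS n W g / 2 ^ n) \<le> (1 / real n) * (2 * (c * a * (2 ^ n * (sqrt n * b))) / 2 ^ n)"
      by (rule mult_left_mono) simp
    then show ?thesis using stepA by linarith
  qed
  also have "\<dots> = 2 * c * a * b * (sqrt n / n)" by simp
  also have "sqrt n / n = 1 / sqrt n"
  proof -
    have sp: "0 < sqrt (real n)" using n1 by simp
    have "real n = sqrt n * sqrt n" by simp
    then show ?thesis using sp by (metis divide_divide_eq_right div_self less_irrefl times_divide_eq_left mult_1)
  qed
  also have "2 * c * a * b * (1 / sqrt n) = 8 * (L * a * b)^2 / sqrt (real n)"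
    unfolding c_def B_def by (simp add: power2_eq_square)
  finally show ?thesis .
qed

lemma ln2_ge: "1/2 \<le> ln (2::real)"
proof -
  have "ln (1/2::real) \<le> 1/2 - 1" by (rule ln_le_minus_one) simp
  moreover have "ln (1/2::real) = - ln 2" by (simp add: ln_div)
  ultimately show ?thesis by simp
qed

lemma final_arith:
  fixes M s q r n C :: real
  assumes "0 \<le> M" "1 \<le> s" "1/2 \<le> q" "1/2 \<le> r" "0 < sn" "0 < n"
  shows "8 * M / sn \<le> 32 * (1 / n + M * s / sn * q * r)"
proof -
  have "M / sn * (1/4) \<le> M / sn * (s * q * r)"
  proof (rule mult_left_mono)
    have "1/2 * (1/2) \<le> q * r" using assms by (intro mult_mono) auto
    moreover have "q * r \<le> s * (q * r)" using assms mult_right_mono[of 1 s "q*r"] by auto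
    ultimately show "1/4 \<le> s * q * r" by (simp add: mult.assoc)
  qed (use assms in simp)
  moreover have "0 \<le> 1 / n" using assms by simp
  then have "32 * (M / sn * (s * q * r)) \<le> 32 * (1 / n + M / sn * (s * q * r))" by simp
  moreover have "8 * M / sn = 32 * (M / sn * (1/4))" by simp
  moreover have "M * s / sn * q * r = M / sn * (s * q * r)" by simp
  ultimately show ?thesis by (smt (verit))
qed

theorem corollary1:
  "\<exists>C>0. \<forall>(n::nat) (d::nat) (k::nat) (\<phi>::real \<Rightarrow> real) (L::real) (b::real) (a::real)
      (x::nat \<Rightarrow> nat \<Rightarrow> real) (x'::nat \<Rightarrow> nat \<Rightarrow> real).
     n \<ge> 1 \<longrightarrow> d \<ge> 1 \<longrightarrow> k \<ge> 1 \<longrightarrow>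
     (\<forall>s t. \<bar>\<phi> s - \<phi> t\<bar> \<le> L * \<bar>s - t\<bar>) \<longrightarrow> \<phi> 0 = 0 \<longrightarrow>
     b > 0 \<longrightarrow> (\<forall>i<n. vnorm d (x i) \<le> b \<and> vnorm d (x' i) \<le> b) \<longrightarrow> a > 0 \<longrightarrow>
     rademacher n (F_set n d k \<phi> x x' (G_set d k a))
       \<le> C * (1 / real n + a^2 * b^2 * sqrt (real k) * L^2 / sqrt (real n)
               * sqrt (ln (2 * real d * real k)) * ln (2 + real n * b^2 * a^2 * L^2))"
proof (rule exI[of _ 32], intro conjI allI impI)
  fix n d k :: nat and \<phi> :: "real \<Rightarrow> real" and L b a :: real and x x' :: "nat \<Rightarrow> nat \<Rightarrow> real"
  assume n1: "n \<ge> 1" and d1: "d \<ge> 1" and k1: "k \<ge> 1"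
    and lip: "\<forall>s t. \<bar>\<phi> s - \<phi> t\<bar> \<le> L * \<bar>s - t\<bar>" and phi0: "\<phi> 0 = 0"
    and b0: "b > 0" and xb: "\<forall>i<n. vnorm d (x i) \<le> b \<and> vnorm d (x' i) \<le> b" and a0: "a > 0"
  have mb: "rademacher n (F_set n d k \<phi> x x' (G_set d k a)) \<le> 8 * (L * a * b)^2 / sqrt (real n)"
    by (rule main_bound[OF n1 k1 lip phi0 b0 xb a0])
  have s1: "1 \<le> sqrt (real k)" using k1 by simp
  have l2: "1/2 \<le> ln (2 * real d * real k)"
  proof -
    have dk: "1 \<le> real d * real k" using d1 k1 mult_mono[of 1 "real d" 1 "real k"] by simp
    have "ln 2 \<le> ln (2 * real d * real k)" using dk
      by (subst ln_le_cancel_iff) (auto simp: mult.assoc)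
    then show ?thesis using ln2_ge by linarith
  qed
  have q: "1/2 \<le> sqrt (ln (2 * real d * real k))"
  proof -
    have "sqrt (1/4) \<le> sqrt (ln (2 * real d * real k))" using l2 by (subst real_sqrt_le_iff) linarith
    moreover have "sqrt (1/4 :: real) = 1/2" by (simp add: real_sqrt_divide)
    ultimately show ?thesis by simp
  qed
  have r: "1/2 \<le> ln (2 + real n * b^2 * a^2 * L^2)"
  proof -
    have "0 \<le> real n * b^2 * a^2 * L^2" by simp
    then have "ln 2 \<le> ln (2 + real n * b^2 * a^2 * L^2)"
      by (intro ln_mono) auto
    then show ?thesis using ln2_ge by linarith
  qed
  note fa = final_arith[of "(L*a*b)^2" "sqrt (real k)" "sqrt (ln (2 * real d * real k))" "ln (2 + real n * b^2 * a^2 * L^2)" "sqrt (real n)" "real n"]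
  show "rademacher n (F_set n d k \<phi> x x' (G_set d k a))
       \<le> 32 * (1 / real n + a^2 * b^2 * sqrt (real k) * L^2 / sqrt (real n)
               * sqrt (ln (2 * real d * real k)) * ln (2 + real n * b^2 * a^2 * L^2))"
    using mb fa s1 q r n1 by (simp add: power_mult_distrib algebra_simps)
qed simp

end
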